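(* Let $\mathcal{I}$ be an $F_\sigma$ ideal on $\mathbb{N}$. Then (i) $\mathcal{I}$ is uniformly $p^+$; (ii) if $\mathcal{I}$ is $q^+$, then $\mathcal{I}$ is uniformly $q^+$. In particular, every selective $F_\sigma$ ideal is uniformly selective.
   Context: Subsets of $\mathbb{N}$ are identified with elements of $2^{\mathbb{N}}$. An ideal on $\mathbb{N}$ is a hereditary family closed under finite unions; it is $F_\sigma$ if it is an $F_\sigma$ subset of $2^{\mathbb{N}}$; $\mathcal{I}^+=2^{\mathbb{N}}\setminus\mathcal{I}$. For $x\subseteq\mathbb{N}$, $x/n=\{m\in x:m>n\}$. $\mathcal{I}$ is $q^+$ if for every $x\in\mathcal{I}^+$ and every partition $(s_n)_{n}$ of $x$ into finite sets there is $y\subseteq x$ with $y\in\mathcal{I}^+$ and $|y\cap s_n|\le 1$ for all $n$. $\mathcal{I}$ is selective if for every $\subseteq$-decreasing sequence $(x_n)_n$ in $\mathcal{I}^+$ there is $x\in\mathcal{I}^+$ with $x/n\subseteq x_n$ for all $n\in x$. $\mathcal{I}$ is uniformly $p^+$ if there is a Borel $G:(2^{\mathbb{N}})^{\mathbb{N}}\to2^{\mathbb{N}}$ such that for every decreasing sequence $(x_n)_n$ in $\mathcal{I}^+$, $G((x_n)_n)\in\mathcal{I}^+$ and $G((x_n)_n)\setminus x_n$ is finite for all $n$. $\mathcal{I}$ is uniformly $q^+$ if there is a Borel $F:2^{\mathbb{N}}\times([\mathbb{N}]^{<\omega})^{\mathbb{N}}\to2^{\mathbb{N}}$ such that whenever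 $x\in\mathcal{I}^+$ and $(s_n)_n$ is a partition of $x$ into finite sets, $y=F(x,(s_n)_n)$ satisfies $y\subseteq x$, $y\in\mathcal{I}^+$ and $|y\cap s_n|\le1$ for all $n$. $\mathcal{I}$ is uniformly selective if there is a Borel $H:(2^{\mathbb{N}})^{\mathbb{N}}\to2^{\mathbb{N}}$ such that for every decreasing sequence $(x_n)_n$ in $\mathcal{I}^+$, $x=H((x_n)_n)\in\mathcal{I}^+$ and $x/n\subseteq x_n$ for all $n\in x$. *)

theory Defs
  imports "HOL-Analysis.Analysis"
begin

text \<open>Subsets of nat are identified with points of the Cantor space 2^N = (nat \<Rightarrow> bool),
  carrying the product topology (bool discrete).\<close>

definition chi :: "nat set \<Rightarrow> (nat \<Rightarrow> bool)" where
  "chi x = (\<lambda>n. n \<in> x)"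

definition cantorM :: "nat set measure" where
  "cantorM = vimage_algebra UNIV chi borel"

definition seqM :: "(nat \<Rightarrow> nat set) measure" where
  "seqM = vimage_algebra UNIV (\<lambda>xs n. chi (xs n)) borel"

text \<open>Borel sigma-algebra of 2^N \<times> ([N]^{<omega})^N, where [N]^{<omega} is viewed as a
  (countable, hence Borel) subset of 2^N.\<close>
definition partM :: "(nat set \<times> (nat \<Rightarrow> nat set)) measure" where
  "partM = restrict_space (cantorM \<Otimes>\<^sub>M seqM) (UNIV \<times> {s. \<forall>n. finite (s n)})"

definition is_ideal :: "nat set set \<Rightarrow> bool" where
  "is_ideal I \<longleftrightarrow> {} \<in> I \<and> (\<forall>x\<in>I. \<forall>y. y \<subseteq> x \<longrightarrow> y \<in> I) \<and> (\<forall>x\<in>I. \<forall>y\<in>I. x \<union> y \<in> I)"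

definition fsigma_ideal :: "nat set set \<Rightarrow> bool" where
  "fsigma_ideal I \<longleftrightarrow> fsigma_in euclidean (chi ` I)"

definition positive :: "nat set set \<Rightarrow> nat set set" where
  "positive I = UNIV - I"

definition tail :: "nat set \<Rightarrow> nat \<Rightarrow> nat set" where
  "tail x n = {m \<in> x. m > n}"

definition decreasing_in :: "nat set set \<Rightarrow> (nat \<Rightarrow> nat set) \<Rightarrow> bool" where
  "decreasing_in A xs \<longleftrightarrow> (\<forall>n. xs (Suc n) \<subseteq> xs n) \<and> (\<forall>n. xs n \<in> A)"

text \<open>(s n) is a partition of x into finite sets (empty pieces allowed).\<close>
definition finite_partition :: "nat set \<Rightarrow> (nat \<Rightarrow> nat set) \<Rightarrow> bool" where
  "finite_partition x s \<longleftrightarrow> (\<forall>n. finite (s n)) \<and> (\<Union>n. s n) = x \<and>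
     (\<forall>n m. n \<noteq> m \<longrightarrow> s n \<inter> s m = {})"

definition qplus :: "nat set set \<Rightarrow> bool" where
  "qplus I \<longleftrightarrow> (\<forall>x s. x \<in> positive I \<and> finite_partition x s \<longrightarrow>
     (\<exists>y. y \<subseteq> x \<and> y \<in> positive I \<and> (\<forall>n. card (y \<inter> s n) \<le> 1)))"

definition selective :: "nat set set \<Rightarrow> bool" where
  "selective I \<longleftrightarrow> (\<forall>xs. decreasing_in (positive I) xs \<longrightarrow>
     (\<exists>x. x \<in> positive I \<and> (\<forall>n\<in>x. tail x n \<subseteq> xs n)))"

definition uniformly_pplus :: "nat set set \<Rightarrow> bool" where
  "uniformly_pplus I \<longleftrightarrow> (\<exists>G. G \<in> measurable seqM cantorM \<and>
     (\<forall>xs. decreasing_in (positive I) xs \<longrightarrow>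
        G xs \<in> positive I \<and> (\<forall>n. finite (G xs - xs n))))"

definition uniformly_qplus :: "nat set set \<Rightarrow> bool" where
  "uniformly_qplus I \<longleftrightarrow> (\<exists>F. F \<in> measurable partM cantorM \<and>
     (\<forall>x s. x \<in> positive I \<and> finite_partition x s \<longrightarrow>
        F (x, s) \<subseteq> x \<and> F (x, s) \<in> positive I \<and> (\<forall>n. card (F (x, s) \<inter> s n) \<le> 1)))"

definition uniformly_selective :: "nat set set \<Rightarrow> bool" where
  "uniformly_selective I \<longleftrightarrow> (\<exists>H. H \<in> measurable seqM cantorM \<and>
     (\<forall>xs. decreasing_in (positive I) xs \<longrightarrow>
        H xs \<in> positive I \<and> (\<forall>n\<in>H xs. tail (H xs) n \<subseteq> xs n)))"

end

theory Submission imports Defs "HOL-Library.Nat_Bijection" begin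


instance bool :: second_countable_topology
proof
  show "\<exists>B::bool set set. countable B \<and> open = generate_topology B"
    by (intro exI[of _ "Pow UNIV"]) (auto simp: fun_eq_iff open_discrete intro: generate_topology.Basis)
qed

abbreviation mpred where "mpred M P \<equiv> P \<in> measurable M (count_space (UNIV::bool set))"

lemma borel_bool_meas: "(f :: 'a \<Rightarrow> bool) \<in> borel_measurable M \<longleftrightarrow> mpred M f"
proof -
  have "sets (borel::bool measure) = sets (count_space UNIV)"
    using sets_borel_eq_count_space[where 'a=bool] by simp
  then show ?thesis using measurable_cong_sets[OF refl] by blast
qed

lemma pred_cantor: "mpred cantorM (\<lambda>x. (n::nat) \<in> x)"
proof -
  have "chi \<in> measurable cantorM borel"
    unfolding cantorM_def by (rule measurable_vimage_algebra1) auto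
  then have "(\<lambda>x. chi x n) \<in> borel_measurable cantorM"
    by (rule measurable_product_then_coordinatewise)
  then show ?thesis by (simp add: borel_bool_meas chi_def)
qed

lemma pred_seq: "mpred seqM (\<lambda>xs. (n::nat) \<in> xs (m::nat))"
proof -
  have "(\<lambda>xs n. chi (xs n)) \<in> measurable seqM borel"
    unfolding seqM_def by (rule measurable_vimage_algebra1) auto
  then have "(\<lambda>xs. chi (xs m)) \<in> borel_measurable seqM"
    by (rule measurable_product_then_coordinatewise)
  then have "(\<lambda>xs. chi (xs m) n) \<in> borel_measurable seqM"
    by (rule measurable_product_then_coordinatewise)
  then show ?thesis by (simp add: borel_bool_meas chi_def)
qed

lemma pred_part1: "mpred partM (\<lambda>p. (n::nat) \<in> fst p)"
proof -
  have "fst \<in> measurable (cantorM \<Otimes>\<^sub>M seqM) cantorM" by simp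
  then have "(\<lambda>p. n \<in> fst p) \<in> measurable (cantorM \<Otimes>\<^sub>M seqM) (count_space UNIV)"
    using measurable_compose[OF _ pred_cantor] by blast
  then show ?thesis unfolding partM_def by (rule measurable_restrict_space1)
qed

lemma pred_part2: "mpred partM (\<lambda>p. (n::nat) \<in> snd p (j::nat))"
proof -
  have "snd \<in> measurable (cantorM \<Otimes>\<^sub>M seqM) seqM" by simp
  then have "(\<lambda>p. n \<in> snd p j) \<in> measurable (cantorM \<Otimes>\<^sub>M seqM) (count_space UNIV)"
    using measurable_compose[OF _ pred_seq] by blast
  then show ?thesis unfolding partM_def by (rule measurable_restrict_space1)
qed

lemma meas_to_cantor:
  assumes "\<And>n. mpred M (\<lambda>w. n \<in> F w)"
  shows "F \<in> measurable M cantorM"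
  unfolding cantorM_def
proof (rule measurable_vimage_algebra2)
  show "F \<in> space M \<rightarrow> UNIV" by simp
  show "(\<lambda>x. chi (F x)) \<in> borel_measurable M"
    by (rule measurable_coordinatewise_then_product)
       (simp add: chi_def borel_bool_meas assms)
qed




definition blkstep :: "('w \<Rightarrow> nat \<Rightarrow> nat set \<Rightarrow> nat set \<Rightarrow> bool) \<Rightarrow> 'w \<Rightarrow> nat \<Rightarrow> nat set \<Rightarrow> nat set" where
  "blkstep C w m T = (if \<exists>k. C w m T (set_decode k) then set_decode (LEAST k. C w m T (set_decode k)) else {})"

fun acc :: "('w \<Rightarrow> nat \<Rightarrow> nat set \<Rightarrow> nat set \<Rightarrow> bool) \<Rightarrow> 'w \<Rightarrow> nat \<Rightarrow> nat set" where
  "acc C w 0 = {}"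
| "acc C w (Suc m) = acc C w m \<union> blkstep C w m (acc C w m)"

definition blk where "blk C w m = blkstep C w m (acc C w m)"
definition res where "res C w = (\<Union>m. acc C w m)"

lemma finite_blkstep: "finite (blkstep C w m T)"
  by (simp add: blkstep_def)

lemma finite_acc: "finite (acc C w m)"
  by (induction m) (auto simp: finite_blkstep)

lemma acc_eq: "acc C w m = (\<Union>i<m. blk C w i)"
  by (induction m) (auto simp: blk_def lessThan_Suc)

lemma res_eq: "res C w = (\<Union>m. blk C w m)"
  unfolding res_def acc_eq by auto

lemma blk_sub_res: "blk C w m \<subseteq> res C w"
  unfolding res_eq by auto

lemma blk_sub_acc: "i < m \<Longrightarrow> blk C w i \<subseteq> acc C w m"
  unfolding acc_eq by auto

lemma blkstep_good:
  assumes "finite B" "C w m T B"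
  shows "C w m T (blkstep C w m T)"
proof -
  have "C w m T (set_decode (set_encode B))" using assms by simp
  then have ex: "\<exists>k. C w m T (set_decode k)" by blast
  then show ?thesis unfolding blkstep_def
    using LeastI_ex[OF ex] by simp
qed

lemma blk_good:
  assumes "finite B" "C w m (acc C w m) B"
  shows "C w m (acc C w m) (blk C w m)"
  using blkstep_good[of B C w m "acc C w m", OF assms] by (simp add: blk_def)

lemma blkstep_iff:
  "blkstep C w m S = A \<longleftrightarrow>
    (\<exists>j. C w m S (set_decode j) \<and> (\<forall>i<j. \<not> C w m S (set_decode i)) \<and> set_decode j = A) \<or>
    ((\<forall>k. \<not> C w m S (set_decode k)) \<and> {} = A)"
proof (cases "\<exists>k. C w m S (set_decode k)")
  case True
  let ?j = "LEAST k. C w m S (set_decode k)"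
  have j: "C w m S (set_decode ?j)" "\<forall>i<?j. \<not> C w m S (set_decode i)"
    using LeastI_ex[OF True] not_less_Least by auto
  have "(\<exists>j. C w m S (set_decode j) \<and> (\<forall>i<j. \<not> C w m S (set_decode i)) \<and> set_decode j = A)
        \<longleftrightarrow> set_decode ?j = A"
  proof
    assume "\<exists>j. C w m S (set_decode j) \<and> (\<forall>i<j. \<not> C w m S (set_decode i)) \<and> set_decode j = A"
    then obtain j where "C w m S (set_decode j)" "\<forall>i<j. \<not> C w m S (set_decode i)" "set_decode j = A" by blast
    moreover have "j = ?j"
      by (metis (mono_tags, lifting) Least_equality calculation(1,2) not_le)
    ultimately show "set_decode ?j = A" by simp
  qed (use j in blast)
  then show ?thesis using True by (auto simp: blkstep_def)
qed (auto simp: blkstep_def)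

lemma res_meas:
  assumes C: "\<And>m T B. mpred M (\<lambda>w. C w m T B)"
  shows "mpred M (\<lambda>w. n \<in> res C w)"
proof -
  have step: "mpred M (\<lambda>w. blkstep C w m S = A)" for m S A
    unfolding blkstep_iff using C by measurable
  have accm: "mpred M (\<lambda>w. acc C w m = A)" for m A
  proof (induction m arbitrary: A)
    case 0
    then show ?case by simp
  next
    case (Suc m)
    have eq: "acc C w (Suc m) = A \<longleftrightarrow> (\<exists>k j. acc C w m = set_decode k \<and> blkstep C w m (set_decode k) = set_decode j
            \<and> set_decode k \<union> set_decode j = A)" for w
    proof
      assume "acc C w (Suc m) = A"
      then show "\<exists>k j. acc C w m = set_decode k \<and> blkstep C w m (set_decode k) = set_decode j
            \<and> set_decode k \<union> set_decode j = A"
        by (intro exI[of _ "set_encode (acc C w m)"] exI[of _ "set_encode (blkstep C w m (acc C w m))"])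
           (simp add: finite_acc finite_blkstep)
    qed auto
    show ?case unfolding eq using Suc step by measurable
  qed
  have eq: "n \<in> res C w \<longleftrightarrow> (\<exists>m k. acc C w m = set_decode k \<and> n \<in> set_decode k)" for w
    unfolding res_def by auto (metis finite_acc set_encode_inverse)
  show ?thesis unfolding eq by (intro pred_intros_countable pred_intros_conj2' accm)
qed




lemma chi_inj: "chi x = chi y \<Longrightarrow> x = y"
  unfolding chi_def by (metis mem_Collect_eq Collect_mem_eq)

lemma chi_inv: "chi {n. f n} = f"
  unfolding chi_def by simp

lemma compact_cantor: "compact (UNIV :: (nat \<Rightarrow> bool) set)"
proof -
  have "compact_space (euclidean :: bool topology)"
    by (simp add: compact_space_def finite_imp_compact)
  then have "compact_space (product_topology (\<lambda>i::nat. (euclidean :: bool topology)) UNIV)"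
    using compact_space_product_topology by blast
  then show ?thesis
    by (simp add: euclidean_product_topology compact_space_def)
qed

locale fsi =
  fixes I :: "nat set set"
  assumes ideal: "is_ideal I" and fs: "fsigma_ideal I"
begin

definition Cl where
  "Cl = (SOME C. (\<forall>n. closedin euclidean (C n)) \<and> (\<forall>n. C n \<subseteq> C (Suc n)) \<and> \<Union> (range C) = chi ` I)"

lemma Cl: "\<And>n. closed (Cl n)" "\<Union> (range Cl) = chi ` I"
proof -
  have "\<exists>C. (\<forall>n. closedin euclidean (C n)) \<and> (\<forall>n. C n \<subseteq> C (Suc n)) \<and> \<Union> (range C) = chi ` I"
    using fs unfolding fsigma_ideal_def fsigma_in_ascending by blast
  from someI_ex[OF this] show "\<And>n. closed (Cl n)" "\<Union> (range Cl) = chi ` I"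
    unfolding Cl_def by auto
qed

definition Aset where "Aset m = {z. chi z \<in> Cl m}"
definition K where "K m = {y. \<forall>k. \<exists>z\<in>Aset m. y \<inter> {..<k} \<subseteq> z}"

lemma hered: "x \<in> I \<Longrightarrow> y \<subseteq> x \<Longrightarrow> y \<in> I"
  using ideal unfolding is_ideal_def by blast

lemma union_I: "x \<in> I \<Longrightarrow> y \<in> I \<Longrightarrow> x \<union> y \<in> I"
  using ideal unfolding is_ideal_def by blast

lemma empty_I: "{} \<in> I"
  using ideal unfolding is_ideal_def by blast

lemma finite_I: "finite F \<Longrightarrow> (\<forall>a\<in>F. {a} \<in> I) \<Longrightarrow> F \<in> I"
proof (induction F rule: finite_induct)
  case empty then show ?case using empty_I by simp
next
  case (insert x F)
  then show ?case using union_I[of "{x}" F] by simp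
qed

lemma Aset_I: "z \<in> Aset m \<Longrightarrow> z \<in> I"
  using Cl(2) unfolding Aset_def by (auto dest: chi_inj)

lemma K_hered: "y \<in> K m \<Longrightarrow> w \<subseteq> y \<Longrightarrow> w \<in> K m"
  unfolding K_def by blast

lemma notK: assumes "y \<notin> K m" shows "\<exists>k. y \<inter> {..<k} \<notin> K m"
proof -
  obtain k where k: "\<forall>z\<in>Aset m. \<not> y \<inter> {..<k} \<subseteq> z" using assms unfolding K_def by blast
  have "y \<inter> {..<k} \<notin> K m"
  proof
    assume "y \<inter> {..<k} \<in> K m"
    then obtain z where "z \<in> Aset m" "y \<inter> {..<k} \<inter> {..<k} \<subseteq> z" unfolding K_def by blast
    then show False using k by (simp add: Int_assoc)
  qed
  then show ?thesis by blast
qed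

lemma K_I: assumes "y \<in> K m" shows "y \<in> I"
proof -
  define E where "E k = (\<Inter>n\<in>{n. n < k \<and> n \<in> y}. {g::nat\<Rightarrow>bool. g n = True})" for k
  have cl: "closed (E k)" for k
    unfolding E_def
    by (intro closed_INT ballI closed_Collect_eq continuous_on_product_coordinates continuous_on_const)
  have "compact (Cl m)"
    using compact_cantor Cl(1) by (metis closed_Int_compact inf_top.right_neutral)
  moreover have "Cl m \<inter> (\<Inter>i\<in>I'. E i) \<noteq> {}" if "finite I'" for I'
  proof -
    define k0 where "k0 = Suc (Max (insert 0 I'))"
    have sub: "E k0 \<subseteq> (\<Inter>i\<in>I'. E i)"
    proof -
      have lt: "i < k0" if "i \<in> I'" for i
        using that \<open>finite I'\<close> unfolding k0_def by (simp add: le_imp_less_Suc)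
      show ?thesis
      proof (intro subsetI INT_I)
        fix g i assume g: "g \<in> E k0" and i: "i \<in> I'"
        have "{n. n < i \<and> n \<in> y} \<subseteq> {n. n < k0 \<and> n \<in> y}" using lt[OF i] by auto
        then show "g \<in> E i" using g unfolding E_def by blast
      qed
    qed
    obtain z where z: "z \<in> Aset m" "y \<inter> {..<k0} \<subseteq> z"
      using assms unfolding K_def by blast
    have "chi z \<in> Cl m" using z(1) unfolding Aset_def by simp
    moreover have "chi z \<in> E k0" using z(2) unfolding E_def chi_def by auto
    ultimately show ?thesis using sub by blast
  qed
  ultimately have "Cl m \<inter> (\<Inter>i\<in>UNIV. E i) \<noteq> {}"
    using compact_imp_fip_image[of "Cl m" UNIV E] cl by blast
  then obtain g where g: "g \<in> Cl m" "\<And>k. g \<in> E k" by blast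
  have "y \<subseteq> {n. g n}"
  proof
    fix n assume "n \<in> y"
    then show "n \<in> {n. g n}" using g(2)[of "Suc n"] unfolding E_def by auto
  qed
  moreover have "{n. g n} \<in> Aset m" using g(1) chi_inv[of g] unfolding Aset_def by simp
  ultimately show ?thesis using Aset_I hered by blast
qed

lemma I_K: "y \<in> I \<longleftrightarrow> (\<exists>m. y \<in> K m)"
proof
  assume "y \<in> I"
  then obtain m where "chi y \<in> Cl m" using Cl(2) by blast
  then have "y \<in> Aset m" unfolding Aset_def by simp
  then show "\<exists>m. y \<in> K m" unfolding K_def by blast
qed (use K_I in blast)

lemma pos_K: "y \<notin> I \<longleftrightarrow> (\<forall>m. y \<notin> K m)"
  using I_K by blast

lemma pos_sup: "B \<notin> K m \<Longrightarrow> B \<subseteq> y \<Longrightarrow> y \<notin> K m"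
  using K_hered by blast

end



lemma pred_subset:
  "(\<And>b. mpred M (\<lambda>w. b \<in> f w)) \<Longrightarrow> mpred M (\<lambda>w. (B::nat set) \<subseteq> f w)"
  unfolding subset_eq by (intro pred_intros_countable_bounded(3))

lemma dec_pos: "decreasing_in (positive I) xs \<Longrightarrow> xs m \<notin> I"
  unfolding decreasing_in_def positive_def by simp

lemma dec_le: assumes "decreasing_in A xs" "m \<le> n" shows "xs n \<subseteq> xs m"
proof -
  have "\<forall>n. xs (Suc n) \<subseteq> xs n" using assms(1) unfolding decreasing_in_def by (rule conjunct1)
  then show ?thesis using lift_Suc_antimono_le[of xs m n] assms(2) by blast
qed

context fsi begin

definition Cp :: "(nat \<Rightarrow> nat set) \<Rightarrow> nat \<Rightarrow> nat set \<Rightarrow> nat set \<Rightarrow> bool" where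
  "Cp xs m T B \<longleftrightarrow> B \<subseteq> xs m \<and> B \<notin> K m"

lemma pplus: "uniformly_pplus I"
  unfolding uniformly_pplus_def
proof (rule exI[of _ "res Cp"], intro conjI allI impI)
  show "res Cp \<in> seqM \<rightarrow>\<^sub>M cantorM"
  proof (rule meas_to_cantor, rule res_meas)
    fix m T B
    show "mpred seqM (\<lambda>w. Cp w m T B)"
      unfolding Cp_def by (intro pred_intros_conj2' pred_subset pred_seq)
  qed
next
  fix xs assume dec: "decreasing_in (positive I) xs"
  have good: "Cp xs m (acc Cp xs m) (blk Cp xs m)" for m
  proof -
    have "xs m \<notin> I" using dec by (rule dec_pos)
    then have "xs m \<notin> K m" using pos_K by blast
    then obtain k where "xs m \<inter> {..<k} \<notin> K m" using notK by blast
    then have "Cp xs m (acc Cp xs m) (xs m \<inter> {..<k})" unfolding Cp_def by blast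
    then show ?thesis by (rule blk_good[rotated]) simp
  qed
  have "res Cp xs \<notin> K m" for m
    using good[of m] blk_sub_res[of Cp xs m] pos_sup unfolding Cp_def by blast
  then show "res Cp xs \<in> positive I" using pos_K unfolding positive_def by blast
next
  fix xs n assume dec: "decreasing_in (positive I) xs"
  have good: "Cp xs m (acc Cp xs m) (blk Cp xs m)" for m
  proof -
    have "xs m \<notin> I" using dec by (rule dec_pos)
    then have "xs m \<notin> K m" using pos_K by blast
    then obtain k where "xs m \<inter> {..<k} \<notin> K m" using notK by blast
    then have "Cp xs m (acc Cp xs m) (xs m \<inter> {..<k})" unfolding Cp_def by blast
    then show ?thesis by (rule blk_good[rotated]) simp
  qed
  have "res Cp xs - xs n \<subseteq> acc Cp xs n"
  proof
    fix a assume a: "a \<in> res Cp xs - xs n"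
    then obtain m where m: "a \<in> blk Cp xs m" unfolding res_eq by blast
    show "a \<in> acc Cp xs n"
    proof (cases "m < n")
      case True then show ?thesis using m blk_sub_acc[where i=m and m=n and C=Cp and w=xs] by blast
    next
      case False
      then have "xs m \<subseteq> xs n" using dec_le[OF dec] by simp
      then show ?thesis using a m good[of m] unfolding Cp_def by blast
    qed
  qed
  then show "finite (res Cp xs - xs n)" by (rule finite_subset[OF _ finite_acc])
qed

end



lemma pred_const: "mpred M (\<lambda>w. P)" by simp

context fsi begin

definition Cq :: "nat set \<times> (nat \<Rightarrow> nat set) \<Rightarrow> nat \<Rightarrow> nat set \<Rightarrow> nat set \<Rightarrow> bool" where
  "Cq p m T B \<longleftrightarrow> B \<subseteq> fst p \<and> B \<notin> K m \<and>
     (\<forall>j. \<forall>a\<in>B. \<forall>b\<in>B. a \<in> snd p j \<and> b \<in> snd p j \<longrightarrow> a = b) \<and>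
     (\<forall>j. \<forall>a\<in>B. \<forall>t\<in>T. \<not> (a \<in> snd p j \<and> t \<in> snd p j))"

definition U where "U = {a. {a} \<notin> I}"

definition Fq where
  "Fq p = (if fst p \<inter> U \<noteq> {} then {LEAST a. a \<in> fst p \<inter> U} else res Cq p)"

lemma Cq_meas: "mpred partM (\<lambda>p. Cq p m T B)"
  unfolding Cq_def
  apply (rule pred_intros_logic(3))
   apply (rule pred_subset, rule pred_part1)
  apply (rule pred_intros_conj1')
  apply (rule pred_intros_logic(3))
   apply (rule pred_intros_countable(1), rule pred_intros_countable_bounded(3), rule pred_intros_countable_bounded(3))
   apply (rule pred_intros_logic(4))
    apply (rule pred_intros_logic(3), rule pred_part2, rule pred_part2)
   apply (rule pred_const)
  apply (rule pred_intros_countable(1), rule pred_intros_countable_bounded(3), rule pred_intros_countable_bounded(3))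
  apply (rule pred_intros_logic(2), rule pred_intros_logic(3), rule pred_part2, rule pred_part2)
  done

lemma Fq_meas: "Fq \<in> partM \<rightarrow>\<^sub>M cantorM"
proof (rule meas_to_cantor)
  fix n
  have eq: "n \<in> Fq p \<longleftrightarrow>
     ((\<exists>a\<in>U. a \<in> fst p) \<and> (n \<in> fst p \<and> n \<in> U \<and> (\<forall>b\<in>{..<n}. \<not> (b \<in> fst p \<and> b \<in> U)))) \<or>
     (\<not> (\<exists>a\<in>U. a \<in> fst p) \<and> n \<in> res Cq p)" for p
  proof (cases "fst p \<inter> U \<noteq> {}")
    case True
    have A: "n = (LEAST a. a \<in> fst p \<inter> U) \<longleftrightarrow> (n \<in> fst p \<and> n \<in> U \<and> (\<forall>b\<in>{..<n}. \<not> (b \<in> fst p \<and> b \<in> U)))"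
    proof
      assume n: "n = (LEAST a. a \<in> fst p \<inter> U)"
      obtain a where "a \<in> fst p \<inter> U" using True by blast
      then have "(LEAST a. a \<in> fst p \<inter> U) \<in> fst p \<inter> U" by (rule LeastI)
      then have L: "n \<in> fst p \<inter> U" using n by simp
      have M: "\<not> (b \<in> fst p \<and> b \<in> U)" if "b \<in> {..<n}" for b
      proof -
        have "b < (LEAST a. a \<in> fst p \<inter> U)" using that n by simp
        then have "b \<notin> fst p \<inter> U" by (rule not_less_Least)
        then show ?thesis by simp
      qed
      show "n \<in> fst p \<and> n \<in> U \<and> (\<forall>b\<in>{..<n}. \<not> (b \<in> fst p \<and> b \<in> U))"
        using L M by blast
    next
      assume n: "n \<in> fst p \<and> n \<in> U \<and> (\<forall>b\<in>{..<n}. \<not> (b \<in> fst p \<and> b \<in> U))"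
      show "n = (LEAST a. a \<in> fst p \<inter> U)"
      proof (rule Least_equality[symmetric])
        show "n \<in> fst p \<inter> U" using n by blast
        fix y assume y: "y \<in> fst p \<inter> U"
        show "n \<le> y"
        proof (rule ccontr)
          assume "\<not> n \<le> y"
          then have "y \<in> {..<n}" by simp
          then show False using n y by blast
        qed
      qed
    qed
    have B: "n \<in> Fq p \<longleftrightarrow> n = (LEAST a. a \<in> fst p \<inter> U)"
      unfolding Fq_def using True by simp
    have C: "(\<exists>a\<in>U. a \<in> fst p) = True" using True by blast
    show ?thesis by (simp only: A B C simp_thms)
  next
    case False
    then have B: "n \<in> Fq p \<longleftrightarrow> n \<in> res Cq p" unfolding Fq_def by simp
    have C: "(\<exists>a\<in>U. a \<in> fst p) = False" using False by blast
    show ?thesis by (simp only: B C simp_thms)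
  qed
  show "mpred partM (\<lambda>p. n \<in> Fq p)"
    unfolding eq
    apply (rule pred_intros_logic(5))
     apply (rule pred_intros_logic(3))
      apply (rule pred_intros_countable_bounded(4), rule pred_part1)
     apply (rule pred_intros_logic(3), rule pred_part1)
     apply (rule pred_intros_conj1')
     apply (rule pred_intros_countable_bounded(3))
     apply (rule pred_intros_logic(2))
     apply (rule pred_intros_conj2', rule pred_part1)
    apply (rule pred_intros_logic(3))
     apply (rule pred_intros_logic(2), rule pred_intros_countable_bounded(4), rule pred_part1)
    apply (rule res_meas, rule Cq_meas)
    done
qed


lemma Cq_exists:
  assumes xp: "x \<notin> I" and fp: "finite_partition x s" and q: "qplus I"
    and xU: "x \<inter> U = {}" and fT: "finite T"
  shows "\<exists>B. finite B \<and> Cq (x, s) m T B"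
proof -
  have fin: "\<And>n. finite (s n)" and un: "(\<Union>n. s n) = x"
    and dj: "\<And>n m. n \<noteq> m \<Longrightarrow> s n \<inter> s m = {}"
    using fp unfolding finite_partition_def by blast+
  define x' where "x' = {a \<in> x. \<forall>j. a \<in> s j \<longrightarrow> s j \<inter> T = {}}"
  have x'x: "x' \<subseteq> x" unfolding x'_def by blast
  have D: "x - x' \<subseteq> (\<Union>t\<in>T. \<Union>j\<in>{j. t \<in> s j}. s j)"
    unfolding x'_def by blast
  have fj: "finite {j. t \<in> s j}" for t
  proof (cases "\<exists>j. t \<in> s j")
    case True
    then obtain j0 where j0: "t \<in> s j0" by blast
    have "{j. t \<in> s j} \<subseteq> {j0}"
    proof
      fix j assume "j \<in> {j. t \<in> s j}"
      then have "t \<in> s j" by simp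
      then have "j = j0" using dj[of j j0] j0 by blast
      then show "j \<in> {j0}" by simp
    qed
    then show ?thesis by (rule finite_subset) simp
  qed simp
  have "finite (\<Union>t\<in>T. \<Union>j\<in>{j. t \<in> s j}. s j)"
    using fT fj fin by simp
  then have fD: "finite (x - x')" using D by (rule finite_subset[rotated])
  have "\<forall>a\<in>x - x'. {a} \<in> I"
  proof
    fix a assume "a \<in> x - x'"
    then have "a \<notin> U" using xU by blast
    then show "{a} \<in> I" unfolding U_def by simp
  qed
  then have DI: "x - x' \<in> I" using finite_I fD by blast
  have x'p: "x' \<notin> I"
  proof
    assume "x' \<in> I"
    then have "x' \<union> (x - x') \<in> I" using DI by (rule union_I)
    moreover have "x \<subseteq> x' \<union> (x - x')" by blast
    ultimately show False using xp hered by blast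
  qed
  define s' where "s' j = s j \<inter> x'" for j
  have fp': "finite_partition x' s'"
    unfolding finite_partition_def
  proof (intro conjI allI impI)
    fix n show "finite (s' n)" unfolding s'_def using fin[of n] by simp
  next
    show "(\<Union>n. s' n) = x'" unfolding s'_def using un x'x by blast
  next
    fix n m :: nat assume "n \<noteq> m"
    then show "s' n \<inter> s' m = {}" unfolding s'_def using dj[of n m] by blast
  qed
  have "x' \<in> positive I" using x'p unfolding positive_def by simp
  then obtain y where y: "y \<subseteq> x'" "y \<in> positive I" "\<And>n. card (y \<inter> s' n) \<le> 1"
    using q fp' unfolding qplus_def by blast
  have "y \<notin> K m" using y(2) pos_K unfolding positive_def by blast
  then obtain k where k: "y \<inter> {..<k} \<notin> K m" using notK by blast
  define B where "B = y \<inter> {..<k}"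
  have "Cq (x, s) m T B"
    unfolding Cq_def fst_conv snd_conv
  proof (intro conjI allI ballI impI)
    show "B \<subseteq> x" unfolding B_def using y(1) x'x by blast
    show "B \<notin> K m" using k unfolding B_def .
  next
    fix j a b assume a: "a \<in> B" and b: "b \<in> B" and ab: "a \<in> s j \<and> b \<in> s j"
    have fy: "finite (y \<inter> s' j)" unfolding s'_def using fin[of j] by simp
    have cy: "card (y \<inter> s' j) \<le> Suc 0" using y(3)[of j] by simp
    have "\<forall>a1\<in>y \<inter> s' j. \<forall>a2\<in>y \<inter> s' j. a1 = a2"
      using card_le_Suc0_iff_eq[OF fy] cy by blast
    moreover have "a \<in> y \<inter> s' j" "b \<in> y \<inter> s' j"
      using a b ab y(1) unfolding B_def s'_def by blast+
    ultimately show "a = b" by blast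
  next
    fix j a t assume a: "a \<in> B" and t: "t \<in> T"
    show "\<not> (a \<in> s j \<and> t \<in> s j)"
    proof
      assume at: "a \<in> s j \<and> t \<in> s j"
      have "a \<in> x'" using a y(1) unfolding B_def by blast
      then have "s j \<inter> T = {}" using at unfolding x'_def by blast
      then show False using t at by blast
    qed
  qed
  moreover have "finite B" unfolding B_def by simp
  ultimately show ?thesis by blast
qed

lemma Fq_correct:
  assumes xp: "x \<in> positive I" and fp: "finite_partition x s" and q: "qplus I"
  shows "Fq (x, s) \<subseteq> x \<and> Fq (x, s) \<in> positive I \<and> (\<forall>n. card (Fq (x, s) \<inter> s n) \<le> 1)"
proof (cases "x \<inter> U \<noteq> {}")
  case True
  define a0 where "a0 = (LEAST a. a \<in> x \<inter> U)"
  obtain a where "a \<in> x \<inter> U" using True by blast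
  then have a0: "a0 \<in> x \<inter> U" unfolding a0_def by (rule LeastI)
  have F: "Fq (x, s) = {a0}" unfolding Fq_def a0_def using True by simp
  have "{a0} \<notin> I" using a0 unfolding U_def by simp
  moreover have "card ({a0} \<inter> s n) \<le> 1" for n
    by (cases "a0 \<in> s n") auto
  ultimately show ?thesis using F a0 unfolding positive_def by simp
next
  case False
  have xI: "x \<notin> I" using xp unfolding positive_def by simp
  have F: "Fq (x, s) = res Cq (x, s)" unfolding Fq_def using False by simp
  have fin: "\<And>n. finite (s n)" using fp unfolding finite_partition_def by blast
  have good: "Cq (x, s) m (acc Cq (x, s) m) (blk Cq (x, s) m)" for m
  proof -
    have xU: "x \<inter> U = {}" using False by simp
    obtain B where "finite B" "Cq (x, s) m (acc Cq (x, s) m) B"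
      using Cq_exists[OF xI fp q xU finite_acc[of Cq "(x, s)" m], where m=m] by blast
    then show ?thesis by (rule blk_good[where C=Cq and w="(x, s)" and m=m])
  qed
  have sub: "blk Cq (x, s) m \<subseteq> x" for m using good[of m] unfolding Cq_def by simp
  have "res Cq (x, s) \<subseteq> x" unfolding res_eq using sub by blast
  moreover have "res Cq (x, s) \<notin> K m" for m
  proof -
    have "blk Cq (x, s) m \<notin> K m" using good[of m] unfolding Cq_def by simp
    then show ?thesis using blk_sub_res[of Cq "(x, s)" m] pos_sup by blast
  qed
  then have "res Cq (x, s) \<in> positive I" using pos_K unfolding positive_def by blast
  moreover have "card (res Cq (x, s) \<inter> s j) \<le> 1" for j
  proof -
    have fR: "finite (res Cq (x, s) \<inter> s j)" using fin[of j] by simp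
    have "a = b" if a: "a \<in> res Cq (x, s) \<inter> s j" and b: "b \<in> res Cq (x, s) \<inter> s j" for a b
    proof -
      obtain i where i: "a \<in> blk Cq (x, s) i" using a unfolding res_eq by blast
      obtain l where l: "b \<in> blk Cq (x, s) l" using b unfolding res_eq by blast
      have aj: "a \<in> s j" and bj: "b \<in> s j" using a b by blast+
      have pw: "\<forall>a\<in>blk Cq (x, s) m. \<forall>b\<in>blk Cq (x, s) m. a \<in> s j \<and> b \<in> s j \<longrightarrow> a = b" for m
        using good[of m] unfolding Cq_def by simp
      have dis: "\<forall>a\<in>blk Cq (x, s) m. \<forall>t\<in>acc Cq (x, s) m. \<not> (a \<in> s j \<and> t \<in> s j)" for m
        using good[of m] unfolding Cq_def by simp
      consider "i = l" | "i < l" | "l < i" by linarith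
      then show ?thesis
      proof cases
        case 1 then show ?thesis using pw[of i] i l aj bj by blast
      next
        case 2
        then have "a \<in> acc Cq (x, s) l" using i blk_sub_acc[where i=i and m=l and C=Cq and w="(x, s)"] by blast
        then show ?thesis using dis[of l] l aj bj by blast
      next
        case 3
        then have "b \<in> acc Cq (x, s) i" using l blk_sub_acc[where i=l and m=i and C=Cq and w="(x, s)"] by blast
        then show ?thesis using dis[of i] i aj bj by blast
      qed
    qed
    then show ?thesis using card_le_Suc0_iff_eq[OF fR] by simp
  qed
  ultimately show ?thesis using F by simp
qed

lemma qplus_unif: "qplus I \<Longrightarrow> uniformly_qplus I"
  unfolding uniformly_qplus_def
  apply (rule exI[of _ Fq])
  apply (rule conjI[OF Fq_meas])
  apply (intro allI impI)
  apply (erule conjE)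
  apply (rule Fq_correct)
    apply assumption+
  done

end



context fsi begin

definition Cs :: "(nat \<Rightarrow> nat set) \<Rightarrow> nat \<Rightarrow> nat set \<Rightarrow> nat set \<Rightarrow> bool" where
  "Cs xs m T B \<longleftrightarrow> B \<notin> K m \<and> (\<forall>b\<in>B. \<forall>t\<in>T. t < b \<and> b \<in> xs t) \<and>
     (\<forall>a\<in>B. \<forall>b\<in>B. a < b \<longrightarrow> b \<in> xs a)"

lemma Cs_meas: "mpred seqM (\<lambda>xs. Cs xs m T B)"
  unfolding Cs_def
  apply (rule pred_intros_conj1')
  apply (rule pred_intros_logic(3))
   apply (rule pred_intros_countable_bounded(3), rule pred_intros_countable_bounded(3))
   apply (rule pred_intros_conj1', rule pred_seq)
  apply (rule pred_intros_countable_bounded(3), rule pred_intros_countable_bounded(3))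
  apply (rule pred_intros_logic(4), rule pred_const, rule pred_seq)
  done

lemma Cs_exists:
  assumes sel: "selective I" and allfin: "\<And>a. {a} \<in> I"
    and dec: "decreasing_in (positive I) xs" and fT: "finite T"
  shows "\<exists>B. finite B \<and> Cs xs m T B"
proof -
  define M where "M = Max (insert 0 T)"
  have tM: "t \<le> M" if "t \<in> T" for t
    unfolding M_def using fT that by simp
  define ys where "ys n = xs (max n M) - {..M}" for n
  have fM: "{..M} \<in> I" using finite_I[of "{..M}"] allfin by simp
  have ysdec: "decreasing_in (positive I) ys"
    unfolding decreasing_in_def
  proof (intro conjI allI)
    fix n
    have "xs (max (Suc n) M) \<subseteq> xs (max n M)" using dec_le[OF dec, of "max n M" "max (Suc n) M"] by simp
    then show "ys (Suc n) \<subseteq> ys n" unfolding ys_def by blast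
  next
    fix n
    have xn: "xs (max n M) \<notin> I" using dec by (rule dec_pos)
    have "ys n \<notin> I"
    proof
      assume "ys n \<in> I"
      then have "ys n \<union> {..M} \<in> I" using fM by (rule union_I)
      moreover have "xs (max n M) \<subseteq> ys n \<union> {..M}" unfolding ys_def by blast
      ultimately show False using xn hered by blast
    qed
    then show "ys n \<in> positive I" unfolding positive_def by simp
  qed
  obtain w where w: "w \<in> positive I" "\<And>n. n \<in> w \<Longrightarrow> tail w n \<subseteq> ys n"
    using sel ysdec unfolding selective_def by blast
  have "w \<noteq> {}" using w(1) empty_I unfolding positive_def by blast
  then obtain a where a: "a \<in> w" by blast
  define a0 where "a0 = (LEAST a. a \<in> w)"
  have a0: "a0 \<in> w" unfolding a0_def using a by (rule LeastI)
  have a0le: "a0 \<le> b" if "b \<in> w" for b unfolding a0_def using that by (rule Least_le)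
  define w' where "w' = w - {a0}"
  have w'I: "w' \<notin> I"
  proof
    assume "w' \<in> I"
    then have "w' \<union> {a0} \<in> I" using allfin[of a0] by (rule union_I)
    moreover have "w \<subseteq> w' \<union> {a0}" unfolding w'_def by blast
    moreover have "w \<notin> I" using w(1) unfolding positive_def by simp
    ultimately show False using hered by blast
  qed
  have P1: "M < b \<and> b \<in> xs M" if "b \<in> w'" for b
  proof -
    have "b \<in> w" "b \<noteq> a0" using that unfolding w'_def by blast+
    then have "a0 < b" using a0le[of b] by simp
    then have "b \<in> tail w a0" using \<open>b \<in> w\<close> unfolding tail_def by simp
    then have "b \<in> ys a0" using w(2)[OF a0] by blast
    then have "b \<in> xs (max a0 M)" "M < b" unfolding ys_def by auto
    moreover have "xs (max a0 M) \<subseteq> xs M" using dec_le[OF dec, of M "max a0 M"] by simp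
    ultimately show ?thesis by blast
  qed
  have P2: "b \<in> xs c" if "c \<in> w'" "b \<in> w'" "c < b" for b c
  proof -
    have "c \<in> w" "b \<in> w" using that unfolding w'_def by blast+
    then have "b \<in> tail w c" using \<open>c < b\<close> unfolding tail_def by simp
    then have "b \<in> ys c" using w(2)[OF \<open>c \<in> w\<close>] by blast
    then have "b \<in> xs (max c M)" unfolding ys_def by simp
    moreover have "xs (max c M) \<subseteq> xs c" using dec_le[OF dec, of c "max c M"] by simp
    ultimately show ?thesis by blast
  qed
  have "w' \<notin> K m" using w'I pos_K by blast
  then obtain k where k: "w' \<inter> {..<k} \<notin> K m" using notK by blast
  define B where "B = w' \<inter> {..<k}"
  have "Cs xs m T B"
    unfolding Cs_def
  proof (intro conjI ballI impI)
    show "B \<notin> K m" using k unfolding B_def .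
  next
    fix b t assume b: "b \<in> B" and t: "t \<in> T"
    have bw: "b \<in> w'" using b unfolding B_def by blast
    show "t < b" using P1[OF bw] tM[OF t] by simp
    have "xs M \<subseteq> xs t" using dec_le[OF dec tM[OF t]] .
    then show "b \<in> xs t" using P1[OF bw] by blast
  next
    fix c b assume "c \<in> B" "b \<in> B" "c < b"
    then show "b \<in> xs c" using P2 unfolding B_def by blast
  qed
  moreover have "finite B" unfolding B_def by simp
  ultimately show ?thesis by blast
qed

lemma sel_correct:
  assumes sel: "selective I" and allfin: "\<And>a. {a} \<in> I"
    and dec: "decreasing_in (positive I) xs"
  shows "res Cs xs \<in> positive I \<and> (\<forall>n\<in>res Cs xs. tail (res Cs xs) n \<subseteq> xs n)"
proof -
  have good: "Cs xs m (acc Cs xs m) (blk Cs xs m)" for m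
  proof -
    obtain B where "finite B" "Cs xs m (acc Cs xs m) B"
      using Cs_exists[OF sel allfin dec finite_acc[of Cs xs m], where m=m] by blast
    then show ?thesis by (rule blk_good[where C=Cs and w=xs and m=m])
  qed
  have "res Cs xs \<notin> K m" for m
  proof -
    have "blk Cs xs m \<notin> K m" using good[of m] unfolding Cs_def by simp
    then show ?thesis using blk_sub_res[of Cs xs m] pos_sup by blast
  qed
  then have "res Cs xs \<in> positive I" using pos_K unfolding positive_def by blast
  moreover have "tail (res Cs xs) n \<subseteq> xs n" if n: "n \<in> res Cs xs" for n
  proof
    fix b assume "b \<in> tail (res Cs xs) n"
    then have b: "b \<in> res Cs xs" and nb: "n < b" unfolding tail_def by auto
    obtain i where i: "n \<in> blk Cs xs i" using n unfolding res_eq by blast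
    obtain l where l: "b \<in> blk Cs xs l" using b unfolding res_eq by blast
    have pw: "\<forall>a\<in>blk Cs xs m. \<forall>b\<in>blk Cs xs m. a < b \<longrightarrow> b \<in> xs a" for m
      using good[of m] unfolding Cs_def by simp
    have ab: "\<forall>b\<in>blk Cs xs m. \<forall>t\<in>acc Cs xs m. t < b \<and> b \<in> xs t" for m
      using good[of m] unfolding Cs_def by simp
    consider "i = l" | "i < l" | "l < i" by linarith
    then show "b \<in> xs n"
    proof cases
      case 1 then show ?thesis using pw[of i] i l nb by blast
    next
      case 2
      then have "n \<in> acc Cs xs l" using i blk_sub_acc[where i=i and m=l and C=Cs and w=xs] by blast
      then show ?thesis using ab[of l] l by blast
    next
      case 3
      then have "b \<in> acc Cs xs i" using l blk_sub_acc[where i=l and m=i and C=Cs and w=xs] by blast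
      then have "b < n" using ab[of i] i by blast
      then show ?thesis using nb by simp
    qed
  qed
  ultimately show ?thesis by blast
qed

lemma sel_unif: assumes sel: "selective I" shows "uniformly_selective I"
proof (cases "\<forall>a. {a} \<in> I")
  case True
  have allfin: "\<And>a. {a} \<in> I" using True by blast
  have meas: "res Cs \<in> seqM \<rightarrow>\<^sub>M cantorM"
    by (rule meas_to_cantor, rule res_meas, rule Cs_meas)
  show ?thesis unfolding uniformly_selective_def
    apply (rule exI[of _ "res Cs"])
    apply (rule conjI[OF meas])
    apply (intro allI impI)
    apply (rule sel_correct[OF sel allfin])
    apply assumption
    done
next
  case False
  then obtain a where a: "{a} \<notin> I" by blast
  have meas: "(\<lambda>xs. {a}) \<in> seqM \<rightarrow>\<^sub>M cantorM"
    by (rule measurable_const) (simp add: cantorM_def)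
  have "tail {a} a = {}" unfolding tail_def by auto
  then show ?thesis unfolding uniformly_selective_def
    using meas a unfolding positive_def by auto
qed

end

theorem mainTheorem9:
  assumes "is_ideal I" and "fsigma_ideal I"
  shows "uniformly_pplus I \<and> (qplus I \<longrightarrow> uniformly_qplus I) \<and>
         (selective I \<longrightarrow> uniformly_selective I)"
proof -
  interpret fsi I using assms by unfold_locales
  show ?thesis using pplus qplus_unif sel_unif by blast
qed


end
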